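(* Let $H<G$ be groups with $H$ co-sofic in $G$. Then $H<G$ is relatively sofic over $G$.
   Context: $H$ is co-sofic in $G$ if there exist two decreasing sequences $(G_i)_{i\in\mathbb N}$ and $(H_i)_{i\in\mathbb N}$ of subgroups of $G$ such that $\bigcap_i G_i=H$, $H_i<G_i$, $H_i\triangleleft G$, $G/H_i$ is sofic, and $G_i/H_i$ is amenable for all $i$. $H<G$ is relatively sofic over a group $K$ if there exist a sequence of inclusions of groups $(H'_i<G'_i)_{i\in\mathbb N}$ with all $G'_i$ sofic and all $H'_i$ amenable, a free ultrafilter $\omega$ on $\mathbb N$, and an embedding $\pi:G\to\prod_\omega(G'_i\times K)$ into the algebraic ultraproduct such that $\pi(G)\cap\prod_\omega(H'_i\times K)=\pi(H)$. The algebraic ultraproduct is $\prod_\omega L_i=(\prod_i L_i)/N$ with $N=\{(g_i):\{i:g_i=1\}\in\omega\}$. *)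

theory Defs
  imports "HOL-Algebra.Algebra"
begin

definition hamming :: "nat \<Rightarrow> (nat \<Rightarrow> nat) \<Rightarrow> (nat \<Rightarrow> nat) \<Rightarrow> real" where
  "hamming n \<sigma> \<tau> = real (card {k. k < n \<and> \<sigma> k \<noteq> \<tau> k}) / real n"

definition sofic :: "('a, 'b) monoid_scheme \<Rightarrow> bool" where
  "sofic G \<longleftrightarrow> group G \<and>
     (\<forall>F \<epsilon>. finite F \<and> F \<subseteq> carrier G \<and> \<epsilon> > (0::real) \<longrightarrow>
       (\<exists>n::nat. n > 0 \<and> (\<exists>\<phi> :: 'a \<Rightarrow> nat \<Rightarrow> nat.
          (\<forall>g \<in> carrier G. \<phi> g permutes {..<n}) \<and>
          (\<forall>g \<in> F. \<forall>h \<in> F. hamming n (\<phi> (g \<otimes>\<^bsub>G\<^esub> h)) (\<phi> g \<circ> \<phi> h) < \<epsilon>) \<and>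
          (\<forall>g \<in> F. g \<noteq> \<one>\<^bsub>G\<^esub> \<longrightarrow> hamming n (\<phi> g) id > 1 - \<epsilon>))))"

definition amenable :: "('a, 'b) monoid_scheme \<Rightarrow> bool" where
  "amenable G \<longleftrightarrow> group G \<and>
     (\<forall>F \<epsilon>. finite F \<and> F \<subseteq> carrier G \<and> \<epsilon> > (0::real) \<longrightarrow>
       (\<exists>A. finite A \<and> A \<noteq> {} \<and> A \<subseteq> carrier G \<and>
          (\<forall>g \<in> F. real (card (((g <#\<^bsub>G\<^esub> A) - A) \<union> (A - (g <#\<^bsub>G\<^esub> A)))) < \<epsilon> * real (card A))))"

definition cosofic :: "('a, 'b) monoid_scheme \<Rightarrow> 'a set \<Rightarrow> bool" where
  "cosofic G H \<longleftrightarrow>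
     (\<exists>Gs Hs :: nat \<Rightarrow> 'a set.
        (\<forall>i. Gs (Suc i) \<subseteq> Gs i) \<and> (\<forall>i. Hs (Suc i) \<subseteq> Hs i) \<and>
        (\<Inter>i. Gs i) = H \<and>
        (\<forall>i. subgroup (Gs i) G \<and> subgroup (Hs i) (G\<lparr>carrier := Gs i\<rparr>) \<and>
             Hs i \<lhd> G \<and>
             sofic (G Mod Hs i) \<and>
             amenable ((G\<lparr>carrier := Gs i\<rparr>) Mod Hs i)))"

definition free_ultrafilter :: "nat filter \<Rightarrow> bool" where
  "free_ultrafilter \<omega> \<longleftrightarrow> \<omega> \<noteq> bot \<and>
     (\<forall>A. eventually (\<lambda>i. i \<in> A) \<omega> \<or> eventually (\<lambda>i. i \<notin> A) \<omega>) \<and>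
     (\<forall>n. \<not> eventually (\<lambda>i. i = n) \<omega>)"

definition prod_grp :: "(nat \<Rightarrow> ('c, 'm) monoid_scheme) \<Rightarrow> (nat \<Rightarrow> 'c) monoid" where
  "prod_grp L = \<lparr>carrier = Pi UNIV (\<lambda>i. carrier (L i)),
                 monoid.mult = (\<lambda>f g i. f i \<otimes>\<^bsub>L i\<^esub> g i),
                 one = (\<lambda>i. \<one>\<^bsub>L i\<^esub>)\<rparr>"

definition ultra_null :: "nat filter \<Rightarrow> (nat \<Rightarrow> ('c, 'm) monoid_scheme) \<Rightarrow> (nat \<Rightarrow> 'c) set" where
  "ultra_null \<omega> L = {f \<in> carrier (prod_grp L). eventually (\<lambda>i. f i = \<one>\<^bsub>L i\<^esub>) \<omega>}"

definition ultraprod :: "nat filter \<Rightarrow> (nat \<Rightarrow> ('c, 'm) monoid_scheme) \<Rightarrow> (nat \<Rightarrow> 'c) set monoid" where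
  "ultraprod \<omega> L = prod_grp L Mod ultra_null \<omega> L"

definition ultra_subset :: "nat filter \<Rightarrow> (nat \<Rightarrow> ('c, 'm) monoid_scheme) \<Rightarrow> (nat \<Rightarrow> 'c set) \<Rightarrow> (nat \<Rightarrow> 'c) set set" where
  "ultra_subset \<omega> L S = {ultra_null \<omega> L #>\<^bsub>prod_grp L\<^esub> f | f. f \<in> carrier (prod_grp L) \<and> (\<forall>i. f i \<in> S i)}"

text \<open>H < G is relatively sofic over K, with the witness groups G'_i having elements of
  type 'w (given by the first argument).\<close>
definition relatively_sofic_in ::
  "'w itself \<Rightarrow> ('a, 'b) monoid_scheme \<Rightarrow> 'a set \<Rightarrow> ('k, 'c) monoid_scheme \<Rightarrow> bool" where
  "relatively_sofic_in _ G H K \<longleftrightarrow>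
     (\<exists>(G' :: nat \<Rightarrow> 'w monoid) (H' :: nat \<Rightarrow> 'w set).
        (\<forall>i. group (G' i) \<and> sofic (G' i) \<and> subgroup (H' i) (G' i) \<and>
             amenable ((G' i)\<lparr>carrier := H' i\<rparr>)) \<and>
        (\<exists>\<omega> \<pi>. free_ultrafilter \<omega> \<and>
           \<pi> \<in> hom G (ultraprod \<omega> (\<lambda>i. G' i \<times>\<times> K)) \<and> inj_on \<pi> (carrier G) \<and>
           \<pi> ` carrier G \<inter> ultra_subset \<omega> (\<lambda>i. G' i \<times>\<times> K) (\<lambda>i. H' i \<times> carrier K) = \<pi> ` H))"

end

theory Submission
  imports Defs
begin

lemma ex_free_ultrafilter: "\<exists>\<omega>. free_ultrafilter \<omega>"
proof -
  let ?F = "cofinite :: nat filter"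
  have Fnb: "?F \<noteq> bot" by simp
  let ?R = "{(b, a). a \<noteq> bot \<and> a \<le> b \<and> b \<le> ?F}"
  have bot_notin: "c \<in> Chains ?R \<Longrightarrow> bot \<notin> c" for c
    by (auto simp: Chains_def)
  have FR[simp]: "Field ?R = {G. G \<noteq> bot \<and> G \<le> ?F}"
    by (auto simp: Field_def bot_unique)
  have "\<exists>m\<in>Field ?R. \<forall>a\<in>Field ?R. (m, a) \<in> ?R \<longrightarrow> a = m"
  proof (rule Zorns_po_lemma)
    show "Partial_order ?R"
      by (auto simp: partial_order_on_def preorder_on_def
          antisym_def refl_on_def trans_def Field_def bot_unique)
    show "\<exists>u\<in>Field ?R. \<forall>a\<in>C. (a, u) \<in> ?R" if C: "C \<in> Chains ?R" for C
    proof (cases "C = {}")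
      case True then show ?thesis using Fnb by (auto intro!: exI[of _ ?F])
    next
      case False
      have base: "\<exists>x\<in>C. x \<le> inf a b" if "a \<in> C" "b \<in> C" for a b
        using C that by (auto simp: Chains_def inf_absorb1 inf_absorb2)
      have "Inf C = bot \<longleftrightarrow> (\<exists>x\<in>C. x = bot)"
        unfolding trivial_limit_def using eventually_Inf_base[OF False base] by blast
      with C have nb: "Inf C \<noteq> bot" using bot_notin by blast
      from False obtain x where "x \<in> C" by auto
      with C have le: "Inf C \<le> ?F"
        by (auto intro!: Inf_lower2[of x] simp: Chains_def)
      show ?thesis
      proof (rule bexI[of _ "Inf C"])
        show "Inf C \<in> Field ?R" using nb le by simp
        show "\<forall>a\<in>C. (a, Inf C) \<in> ?R"
          using C nb by (auto intro: Inf_lower simp: Chains_def)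
      qed
    qed
  qed
  then obtain U where U0: "U \<in> Field ?R" and M: "\<forall>a\<in>Field ?R. (U, a) \<in> ?R \<longrightarrow> a = U"
    by blast
  have U: "U \<noteq> bot" "U \<le> ?F" using U0 by simp_all
  have max: "a = U" if "a \<noteq> bot" "a \<le> U" for a
  proof -
    have "a \<le> ?F" using that(2) U(2) by (rule order_trans)
    then have "a \<in> Field ?R" using that(1) by simp
    moreover have "(U, a) \<in> ?R" using that U(2) by simp
    ultimately show ?thesis using M by blast
  qed
  have "free_ultrafilter U"
    unfolding free_ultrafilter_def
  proof (intro conjI allI)
    show "U \<noteq> bot" by fact
    fix A :: "nat set"
    show "eventually (\<lambda>i. i \<in> A) U \<or> eventually (\<lambda>i. i \<notin> A) U"
    proof (rule disjCI)
      assume "\<not> eventually (\<lambda>i. i \<notin> A) U"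
      then have "inf U (principal A) \<noteq> bot"
        by (simp add: trivial_limit_def eventually_inf_principal)
      then have "inf U (principal A) = U" by (rule max) simp
      moreover have "eventually (\<lambda>i. i \<in> A) (inf U (principal A))"
        by (simp add: eventually_inf_principal)
      ultimately show "eventually (\<lambda>i. i \<in> A) U" by simp
    qed
  next
    fix n :: nat
    have "eventually (\<lambda>i. i \<noteq> n) ?F" by (simp add: eventually_cofinite)
    then have "eventually (\<lambda>i. i \<noteq> n) U" using U(2) filter_leD by blast
    show "\<not> eventually (\<lambda>i. i = n) U"
    proof
      assume "eventually (\<lambda>i. i = n) U"
      with \<open>eventually (\<lambda>i. i \<noteq> n) U\<close> have "eventually (\<lambda>i. False) U"
        by (rule eventually_elim2) simp
      with U(1) show False by simp
    qed
  qed
  then show ?thesis ..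
qed

lemma prod_grp_eq: "prod_grp L = product_group UNIV L"
  by (simp add: prod_grp_def product_group_def PiE_UNIV_domain restrict_UNIV)

lemma prod_grp_group:
  assumes "\<And>i. group (L i)" shows "group (prod_grp L)"
  unfolding prod_grp_eq using assms by simp

lemma carrier_prod_grp: "carrier (prod_grp L) = Pi UNIV (\<lambda>i. carrier (L i))"
  by (simp add: prod_grp_def)

lemma mult_prod_grp: "x \<otimes>\<^bsub>prod_grp L\<^esub> y = (\<lambda>i. x i \<otimes>\<^bsub>L i\<^esub> y i)"
  by (simp add: prod_grp_def)

lemma one_prod_grp: "\<one>\<^bsub>prod_grp L\<^esub> = (\<lambda>i. \<one>\<^bsub>L i\<^esub>)"
  by (simp add: prod_grp_def)

lemma inv_prod_grp:
  assumes "\<And>i. group (L i)" "x \<in> carrier (prod_grp L)"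
  shows "inv\<^bsub>prod_grp L\<^esub> x = (\<lambda>i. inv\<^bsub>L i\<^esub> x i)"
  using assms unfolding prod_grp_eq by (simp add: PiE_UNIV_domain restrict_UNIV)

lemma ultra_null_normal:
  assumes gr: "\<And>i. group (L i)"
  shows "ultra_null \<omega> L \<lhd> prod_grp L"
proof -
  interpret P: group "prod_grp L" by (rule prod_grp_group[OF gr])
  have sub: "subgroup (ultra_null \<omega> L) (prod_grp L)"
  proof (rule P.subgroupI)
    show "ultra_null \<omega> L \<subseteq> carrier (prod_grp L)" by (auto simp: ultra_null_def)
    have "\<one>\<^bsub>prod_grp L\<^esub> \<in> ultra_null \<omega> L"
      using group.is_monoid[OF gr] by (simp add: ultra_null_def one_prod_grp carrier_prod_grp monoid.one_closed)
    then show "ultra_null \<omega> L \<noteq> {}" by blast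
  next
    fix a assume a: "a \<in> ultra_null \<omega> L"
    then have ac: "a \<in> carrier (prod_grp L)" and ev: "eventually (\<lambda>i. a i = \<one>\<^bsub>L i\<^esub>) \<omega>"
      by (auto simp: ultra_null_def)
    have "eventually (\<lambda>i. inv\<^bsub>L i\<^esub> a i = \<one>\<^bsub>L i\<^esub>) \<omega>"
      using ev by (rule eventually_mono) (simp add: monoid.inv_one group.is_monoid[OF gr])
    then show "inv\<^bsub>prod_grp L\<^esub> a \<in> ultra_null \<omega> L"
      using ac P.inv_closed[OF ac] by (simp add: ultra_null_def inv_prod_grp[OF gr ac])
  next
    fix a b assume a: "a \<in> ultra_null \<omega> L" and b: "b \<in> ultra_null \<omega> L"
    then have ac: "a \<in> carrier (prod_grp L)" and eva: "eventually (\<lambda>i. a i = \<one>\<^bsub>L i\<^esub>) \<omega>"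
      and bc: "b \<in> carrier (prod_grp L)" and evb: "eventually (\<lambda>i. b i = \<one>\<^bsub>L i\<^esub>) \<omega>"
      by (auto simp: ultra_null_def)
    have "eventually (\<lambda>i. a i \<otimes>\<^bsub>L i\<^esub> b i = \<one>\<^bsub>L i\<^esub>) \<omega>"
      using eva evb by (rule eventually_elim2) (simp add: monoid.l_one group.is_monoid[OF gr] monoid.one_closed)
    then show "a \<otimes>\<^bsub>prod_grp L\<^esub> b \<in> ultra_null \<omega> L"
      using ac bc P.m_closed[OF ac bc] by (simp add: ultra_null_def mult_prod_grp)
  qed
  show ?thesis
  proof (subst P.normal_inv_iff, intro conjI ballI sub)
    fix x h assume x: "x \<in> carrier (prod_grp L)" and h: "h \<in> ultra_null \<omega> L"
    then have hc: "h \<in> carrier (prod_grp L)" and ev: "eventually (\<lambda>i. h i = \<one>\<^bsub>L i\<^esub>) \<omega>"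
      by (auto simp: ultra_null_def)
    have xi: "x i \<in> carrier (L i)" for i using x by (auto simp: carrier_prod_grp)
    have "eventually (\<lambda>i. x i \<otimes>\<^bsub>L i\<^esub> h i \<otimes>\<^bsub>L i\<^esub> inv\<^bsub>L i\<^esub> x i = \<one>\<^bsub>L i\<^esub>) \<omega>"
      using ev by (rule eventually_mono) (simp add: xi group.r_inv[OF gr] monoid.r_one group.is_monoid[OF gr])
    moreover have "x \<otimes>\<^bsub>prod_grp L\<^esub> h \<otimes>\<^bsub>prod_grp L\<^esub> inv\<^bsub>prod_grp L\<^esub> x \<in> carrier (prod_grp L)"
      using x hc by simp
    ultimately show "x \<otimes>\<^bsub>prod_grp L\<^esub> h \<otimes>\<^bsub>prod_grp L\<^esub> inv\<^bsub>prod_grp L\<^esub> x \<in> ultra_null \<omega> L"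
      by (simp add: ultra_null_def mult_prod_grp inv_prod_grp[OF gr x])
  qed
qed

lemma ultra_coset_eq:
  assumes gr: "\<And>i. group (L i)"
    and x: "x \<in> carrier (prod_grp L)" and y: "y \<in> carrier (prod_grp L)"
    and eq: "ultra_null \<omega> L #>\<^bsub>prod_grp L\<^esub> x = ultra_null \<omega> L #>\<^bsub>prod_grp L\<^esub> y"
  shows "eventually (\<lambda>i. x i = y i) \<omega>"
proof -
  interpret P: group "prod_grp L" by (rule prod_grp_group[OF gr])
  interpret N: normal "ultra_null \<omega> L" "prod_grp L" by (rule ultra_null_normal[OF gr])
  have "x \<in> ultra_null \<omega> L #>\<^bsub>prod_grp L\<^esub> y"
    using eq P.rcos_self[OF x N.subgroup_axioms] by simp
  then have "x \<otimes>\<^bsub>prod_grp L\<^esub> inv\<^bsub>prod_grp L\<^esub> y \<in> ultra_null \<omega> L"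
    by (rule N.rcos_module_imp[OF P.is_group y])
  then have ev0: "eventually (\<lambda>i. (x \<otimes>\<^bsub>prod_grp L\<^esub> inv\<^bsub>prod_grp L\<^esub> y) i = \<one>\<^bsub>L i\<^esub>) \<omega>"
    unfolding ultra_null_def by blast
  have comp: "(x \<otimes>\<^bsub>prod_grp L\<^esub> inv\<^bsub>prod_grp L\<^esub> y) i = x i \<otimes>\<^bsub>L i\<^esub> inv\<^bsub>L i\<^esub> y i" for i
    by (simp only: mult_prod_grp inv_prod_grp[OF gr y])
  have ev: "eventually (\<lambda>i. x i \<otimes>\<^bsub>L i\<^esub> inv\<^bsub>L i\<^esub> y i = \<one>\<^bsub>L i\<^esub>) \<omega>"
    using ev0 by (rule eventually_mono) (simp only: comp)
  have xi: "x i \<in> carrier (L i)" and yi: "y i \<in> carrier (L i)" for i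
    using x y by (auto simp: carrier_prod_grp)
  have imp: "x i = y i" if "x i \<otimes>\<^bsub>L i\<^esub> inv\<^bsub>L i\<^esub> y i = \<one>\<^bsub>L i\<^esub>" for i
  proof -
    interpret Li: group "L i" by (rule gr)
    have "x i = \<one>\<^bsub>L i\<^esub> \<otimes>\<^bsub>L i\<^esub> y i"
      using Li.inv_solve_right'[OF Li.one_closed xi yi] that by simp
    then show ?thesis using yi by simp
  qed
  show ?thesis
    using ev by (rule eventually_mono) (rule imp)
qed

lemma free_ultrafilter_ge:
  assumes "free_ultrafilter \<omega>"
  shows "eventually (\<lambda>i. j \<le> i) \<omega>"
proof -
  have "eventually (\<lambda>i. i \<noteq> m) \<omega>" for m
  proof -
    have "eventually (\<lambda>i. i \<in> {m}) \<omega> \<or> eventually (\<lambda>i. i \<notin> {m}) \<omega>"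
      and "\<not> eventually (\<lambda>i. i = m) \<omega>"
      using assms unfolding free_ultrafilter_def by blast+
    then show ?thesis by simp
  qed
  then have "eventually (\<lambda>i. \<forall>m\<in>{..<j}. i \<noteq> m) \<omega>"
    by (intro eventually_ball_finite) auto
  then show ?thesis by (rule eventually_mono) (auto simp: not_le[symmetric])
qed


lemma r_coset_restr: "K #>\<^bsub>G\<lparr>carrier := SS\<rparr>\<^esub> a = K #>\<^bsub>G\<^esub> a"
  by (simp add: r_coset_def)

lemma set_mult_restr: "K <#>\<^bsub>G\<lparr>carrier := SS\<rparr>\<^esub> M = K <#>\<^bsub>G\<^esub> M"
  by (simp add: set_mult_def)

lemma Mod_restr:
  "(G Mod N)\<lparr>carrier := rcosets\<^bsub>G\<lparr>carrier := SS\<rparr>\<^esub> N\<rparr> = (G\<lparr>carrier := SS\<rparr>) Mod N"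
  unfolding FactGroup_def by (simp add: set_mult_restr[abs_def])

theorem theorem2p17:
  fixes G :: "('a, 'b) monoid_scheme" and H :: "'a set"
  assumes "group G" and "subgroup H G" and "cosofic G H"
  shows "relatively_sofic_in TYPE('a set) G H G"
proof -
  interpret G: group G by fact
  obtain Gs Hs :: "nat \<Rightarrow> 'a set" where
    decG: "\<And>i. Gs (Suc i) \<subseteq> Gs i" and
    capG: "(\<Inter>i. Gs i) = H" and
    subG: "\<And>i. subgroup (Gs i) G" and
    subH: "\<And>i. subgroup (Hs i) (G\<lparr>carrier := Gs i\<rparr>)" and
    norH: "\<And>i. Hs i \<lhd> G" and
    sof: "\<And>i. sofic (G Mod Hs i)" and
    am: "\<And>i. amenable ((G\<lparr>carrier := Gs i\<rparr>) Mod Hs i)"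
    using assms(3) unfolding cosofic_def by blast
  define G' where "G' i = G Mod Hs i" for i
  define H' where "H' i = rcosets\<^bsub>G\<lparr>carrier := Gs i\<rparr>\<^esub> (Hs i)" for i
  define L where "L i = G' i \<times>\<times> G" for i
  obtain \<omega> where fu: "free_ultrafilter \<omega>" using ex_free_ultrafilter by blast
  have nb: "\<omega> \<noteq> bot" using fu by (simp add: free_ultrafilter_def)
  define P where "P = prod_grp L"
  define N where "N = ultra_null \<omega> L"
  define \<psi> where "\<psi> g = (\<lambda>i. (Hs i #>\<^bsub>G\<^esub> g, g))" for g
  define \<pi> where "\<pi> g = N #>\<^bsub>P\<^esub> \<psi> g" for g
  have HsG: "Hs i \<subseteq> Gs i" for i using subgroup.subset[OF subH[of i]] by simp
  have GsG: "Gs i \<subseteq> carrier G" for i using subgroup.subset[OF subG[of i]] .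
  have grG': "group (G' i)" for i
    unfolding G'_def by (rule normal.factorgroup_is_group[OF norH])
  have grL: "group (L i)" for i
    unfolding L_def by (rule DirProd_group[OF grG' assms(1)])
  interpret P: group P unfolding P_def by (rule prod_grp_group[OF grL])
  interpret N: normal N P unfolding N_def P_def by (rule ultra_null_normal[OF grL])
  have H'_eq: "H' i = {Hs i #>\<^bsub>G\<^esub> a | a. a \<in> Gs i}" for i
    by (auto simp: H'_def RCOSETS_def r_coset_restr)
  have psi_c: "\<psi> g \<in> carrier P" if g: "g \<in> carrier G" for g
    using g G.rcosetsI[OF normal_imp_subgroup[OF norH, THEN subgroup.subset] g]
    by (simp add: P_def carrier_prod_grp \<psi>_def L_def G'_def FactGroup_def)
  have psi_m: "\<psi> (g \<otimes>\<^bsub>G\<^esub> h) = \<psi> g \<otimes>\<^bsub>P\<^esub> \<psi> h" if g: "g \<in> carrier G" and h: "h \<in> carrier G" for g h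
    by (rule ext) (simp add: P_def mult_prod_grp \<psi>_def L_def G'_def normal.rcos_sum[OF norH g h])
  have pi_hom: "\<pi> \<in> hom G (ultraprod \<omega> L)"
  proof (rule homI)
    fix g assume g: "g \<in> carrier G"
    show "\<pi> g \<in> carrier (ultraprod \<omega> L)"
      using P.rcosetsI[OF N.subset psi_c[OF g]]
      by (simp add: ultraprod_def \<pi>_def FactGroup_def P_def N_def)
  next
    fix g h assume g: "g \<in> carrier G" and h: "h \<in> carrier G"
    show "\<pi> (g \<otimes>\<^bsub>G\<^esub> h) = \<pi> g \<otimes>\<^bsub>ultraprod \<omega> L\<^esub> \<pi> h"
      using N.rcos_sum[OF psi_c[OF g] psi_c[OF h]]
      by (simp add: ultraprod_def \<pi>_def psi_m[OF g h] P_def N_def)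
  qed
  have pi_eq: "eventually (\<lambda>i. x i = y i) \<omega>"
    if "x \<in> carrier P" "y \<in> carrier P" "N #>\<^bsub>P\<^esub> x = N #>\<^bsub>P\<^esub> y" for x y
    using ultra_coset_eq[of L, OF grL] that unfolding P_def N_def by blast
  have pi_inj: "inj_on \<pi> (carrier G)"
  proof (rule inj_onI)
    fix g h assume g: "g \<in> carrier G" and h: "h \<in> carrier G" and e: "\<pi> g = \<pi> h"
    have "eventually (\<lambda>i. \<psi> g i = \<psi> h i) \<omega>"
      using pi_eq[OF psi_c[OF g] psi_c[OF h]] e by (simp add: \<pi>_def)
    then have "eventually (\<lambda>i. g = h) \<omega>"
      by (rule eventually_mono) (simp add: \<psi>_def)
    then show "g = h" using nb by simp
  qed
  have inter: "\<pi> ` carrier G \<inter> ultra_subset \<omega> L (\<lambda>i. H' i \<times> carrier G) = \<pi> ` H"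
  proof
    show "\<pi> ` H \<subseteq> \<pi> ` carrier G \<inter> ultra_subset \<omega> L (\<lambda>i. H' i \<times> carrier G)"
    proof
      fix z assume "z \<in> \<pi> ` H"
      then obtain h where h: "h \<in> H" and z: "z = \<pi> h" by blast
      have hc: "h \<in> carrier G" using h assms(2) subgroup.subset by blast
      have hG: "h \<in> Gs i" for i using h capG by blast
      have "\<psi> h i \<in> H' i \<times> carrier G" for i
        using hG[of i] hc by (auto simp: \<psi>_def H'_eq)
      then have "z \<in> ultra_subset \<omega> L (\<lambda>i. H' i \<times> carrier G)"
        unfolding ultra_subset_def using psi_c[OF hc] z
        by (auto simp: \<pi>_def P_def N_def)
      then show "z \<in> \<pi> ` carrier G \<inter> ultra_subset \<omega> L (\<lambda>i. H' i \<times> carrier G)"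
        using z hc by blast
    qed
  next
    show "\<pi> ` carrier G \<inter> ultra_subset \<omega> L (\<lambda>i. H' i \<times> carrier G) \<subseteq> \<pi> ` H"
    proof
      fix z assume zin: "z \<in> \<pi> ` carrier G \<inter> ultra_subset \<omega> L (\<lambda>i. H' i \<times> carrier G)"
      then obtain g where g: "g \<in> carrier G" and z: "z = \<pi> g" by blast
      from zin obtain f where f: "f \<in> carrier P" and fi: "\<And>i. f i \<in> H' i \<times> carrier G"
        and zf: "z = N #>\<^bsub>P\<^esub> f"
        unfolding ultra_subset_def P_def N_def by blast
      have "eventually (\<lambda>i. \<psi> g i = f i) \<omega>"
        using pi_eq[OF psi_c[OF g] f] z zf by (simp add: \<pi>_def)
      then have evG: "eventually (\<lambda>i. g \<in> Gs i) \<omega>"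
      proof (rule eventually_mono)
        fix i assume "\<psi> g i = f i"
        then have "Hs i #>\<^bsub>G\<^esub> g \<in> H' i" using fi[of i] by (auto simp: \<psi>_def)
        then obtain a where a: "a \<in> Gs i" and ea: "Hs i #>\<^bsub>G\<^esub> g = Hs i #>\<^bsub>G\<^esub> a"
          by (auto simp: H'_eq)
        have "g \<in> Hs i #>\<^bsub>G\<^esub> a"
          using G.rcos_self[OF g normal_imp_subgroup[OF norH[of i]]] ea by simp
        then obtain k where k: "k \<in> Hs i" and gk: "g = k \<otimes>\<^bsub>G\<^esub> a"
          unfolding r_coset_def by blast
        show "g \<in> Gs i"
          using subgroup.m_closed[OF subG[of i]] HsG k a gk by blast
      qed
      have "g \<in> Gs j" for j
      proof -
        have "eventually (\<lambda>i. j \<le> i \<and> g \<in> Gs i) \<omega>"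
          using free_ultrafilter_ge[OF fu, of j] evG by (rule eventually_conj)
        then obtain i where "j \<le> i" "g \<in> Gs i"
          using eventually_happens'[OF nb] by blast
        moreover have "Gs i \<subseteq> Gs j"
          using lift_Suc_antimono_le[of Gs, OF decG \<open>j \<le> i\<close>] .
        ultimately show ?thesis by blast
      qed
      then have "g \<in> H" using capG by blast
      then show "z \<in> \<pi> ` H" using z by blast
    qed
  qed
  have sub': "subgroup (H' i) (G' i)" for i
  proof (rule group.group_incl_imp_subgroup[OF grG'])
    show "H' i \<subseteq> carrier (G' i)"
      using GsG[of i] by (auto simp: H'_eq G'_def FactGroup_def RCOSETS_def)
    show "group ((G' i)\<lparr>carrier := H' i\<rparr>)"
      using am[of i] by (simp add: G'_def H'_def Mod_restr amenable_def)
  qed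
  have am': "amenable ((G' i)\<lparr>carrier := H' i\<rparr>)" for i
    using am[of i] by (simp add: G'_def H'_def Mod_restr)
  show ?thesis
    unfolding relatively_sofic_in_def
  proof (rule exI[of _ G'], rule exI[of _ H'], rule conjI)
    show "\<forall>i. group (G' i) \<and> sofic (G' i) \<and> subgroup (H' i) (G' i) \<and>
             amenable ((G' i)\<lparr>carrier := H' i\<rparr>)"
      using grG' sub' am' sof unfolding G'_def by blast
  next
    show "\<exists>\<omega> \<pi>. free_ultrafilter \<omega> \<and>
           \<pi> \<in> hom G (ultraprod \<omega> (\<lambda>i. G' i \<times>\<times> G)) \<and> inj_on \<pi> (carrier G) \<and>
           \<pi> ` carrier G \<inter> ultra_subset \<omega> (\<lambda>i. G' i \<times>\<times> G) (\<lambda>i. H' i \<times> carrier G) = \<pi> ` H"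
      using fu pi_hom pi_inj inter unfolding L_def[abs_def] by blast
  qed
qed

end
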